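(* For all $q,p\in\mathbb{C}^\times$ and $n\ge1$, the operator $R=R_n(q,p)$ satisfies the Yang–Baxter equation $R_{12}R_{13}R_{23}=R_{23}R_{13}R_{12}$, and the operator $\check R=pRP$ satisfies the Hecke equation $(\check R-q)(\check R+q^{-1})=0$.
   Context: $V=\mathbb{C}^n$ with basis $e_1,\dots,e_n$; $P$ is the flip on $V\otimes V$; operators are written $R(e_i\otimes e_j)=\sum_{k,l}R_{ij}^{kl}e_k\otimes e_l$. For $q,p\in\mathbb{C}^\times$, the two-parameter Cremmer–Gervais matrix $R=R_n(q,p)$ has entries (for $1\le i,j,k,l\le n$): $pR_{ij}^{kl}=qp^{2(l-i)}$ if $i=k\ge j=l$; $pR_{ij}^{kl}=q^{-1}p^{2(l-i)}$ if $i=k<j=l$; $pR_{ij}^{kl}=(q-q^{-1})p^{2(l-i)}$ if $j\le k<i$ and $i+j=k+l$; $pR_{ij}^{kl}=(q^{-1}-q)p^{2(l-i)}$ if $i<k<j$ and $i+j=k+l$; and $R_{ij}^{kl}=0$ otherwise. (For $q=p^n$ this is the $R$-matrix of Cremmer and Gervais.) *)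

theory Defs
  imports Complex_Main
begin

text \<open>Operators on V tensor V (V = C^n, basis e_1..e_n) are represented by their
coefficient functions: A (i,j) (k,l) = A_ij^kl, i.e. A(e_i (x) e_j) = sum A_ij^kl e_k (x) e_l.
Similarly for V tensor V tensor V with index triples.\<close>

definition idx2 :: "nat \<Rightarrow> (nat \<times> nat) set" where
  "idx2 n = {1..n} \<times> {1..n}"

definition idx3 :: "nat \<Rightarrow> (nat \<times> nat \<times> nat) set" where
  "idx3 n = {1..n} \<times> {1..n} \<times> {1..n}"

text \<open>Composition A B (first B, then A): (AB)_x^y = sum_z B_x^z A_z^y.\<close>
definition comp2 :: "nat \<Rightarrow> (nat \<times> nat \<Rightarrow> nat \<times> nat \<Rightarrow> complex)
    \<Rightarrow> (nat \<times> nat \<Rightarrow> nat \<times> nat \<Rightarrow> complex) \<Rightarrow> (nat \<times> nat \<Rightarrow> nat \<times> nat \<Rightarrow> complex)" where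
  "comp2 n A B x y = (\<Sum>z\<in>idx2 n. B x z * A z y)"

definition comp3 :: "nat \<Rightarrow> (nat \<times> nat \<times> nat \<Rightarrow> nat \<times> nat \<times> nat \<Rightarrow> complex)
    \<Rightarrow> (nat \<times> nat \<times> nat \<Rightarrow> nat \<times> nat \<times> nat \<Rightarrow> complex)
    \<Rightarrow> (nat \<times> nat \<times> nat \<Rightarrow> nat \<times> nat \<times> nat \<Rightarrow> complex)" where
  "comp3 n A B x y = (\<Sum>z\<in>idx3 n. B x z * A z y)"

definition id2 :: "nat \<times> nat \<Rightarrow> nat \<times> nat \<Rightarrow> complex" where
  "id2 x y = (if x = y then 1 else 0)"

definition CG :: "complex \<Rightarrow> complex \<Rightarrow> nat \<times> nat \<Rightarrow> nat \<times> nat \<Rightarrow> complex" where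
  "CG q p x y = (case x of (i, j) \<Rightarrow> case y of (k, l) \<Rightarrow>
     (let e = p powi (2 * (int l - int i)) in
      if i = k \<and> j = l \<and> i \<ge> j then q * e / p
      else if i = k \<and> j = l \<and> i < j then inverse q * e / p
      else if j \<le> k \<and> k < i \<and> i + j = k + l then (q - inverse q) * e / p
      else if i < k \<and> k < j \<and> i + j = k + l then (inverse q - q) * e / p
      else 0))"

definition leg12 :: "(nat \<times> nat \<Rightarrow> nat \<times> nat \<Rightarrow> complex) \<Rightarrow> nat \<times> nat \<times> nat \<Rightarrow> nat \<times> nat \<times> nat \<Rightarrow> complex" where
  "leg12 R x y = (case x of (i, j, m) \<Rightarrow> case y of (k, l, r) \<Rightarrow>
     R (i, j) (k, l) * (if m = r then 1 else 0))"

definition leg13 :: "(nat \<times> nat \<Rightarrow> nat \<times> nat \<Rightarrow> complex) \<Rightarrow> nat \<times> nat \<times> nat \<Rightarrow> nat \<times> nat \<times> nat \<Rightarrow> complex" where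
  "leg13 R x y = (case x of (i, j, m) \<Rightarrow> case y of (k, l, r) \<Rightarrow>
     R (i, m) (k, r) * (if j = l then 1 else 0))"

definition leg23 :: "(nat \<times> nat \<Rightarrow> nat \<times> nat \<Rightarrow> complex) \<Rightarrow> nat \<times> nat \<times> nat \<Rightarrow> nat \<times> nat \<times> nat \<Rightarrow> complex" where
  "leg23 R x y = (case x of (i, j, m) \<Rightarrow> case y of (k, l, r) \<Rightarrow>
     R (j, m) (l, r) * (if i = k then 1 else 0))"

definition flip :: "nat \<times> nat \<Rightarrow> nat \<times> nat \<Rightarrow> complex" where
  "flip x y = (if y = (snd x, fst x) then 1 else 0)"

definition CGcheck :: "nat \<Rightarrow> complex \<Rightarrow> complex \<Rightarrow> nat \<times> nat \<Rightarrow> nat \<times> nat \<Rightarrow> complex" where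
  "CGcheck n q p x y = p * comp2 n (CG q p) flip x y"

end

theory Submission
  imports Defs
begin

definition Acf :: "complex \<Rightarrow> complex \<Rightarrow> complex \<Rightarrow> complex" where
  "Acf q u v = (q*u - inverse q * v)/(u - v)"
definition Bcf :: "complex \<Rightarrow> complex \<Rightarrow> complex \<Rightarrow> complex" where
  "Bcf q u v = - ((q - inverse q) * v)/(u - v)"

definition cc :: "complex \<Rightarrow> nat \<Rightarrow> nat \<Rightarrow> nat \<Rightarrow> complex" where
  "cc q i j k = inverse q * (if k = i then 1 else 0) + (q - inverse q) * ((if j \<le> k then 1 else 0) - (if i < k then 1 else 0))"

lemma CG_alt:
  assumes "q \<noteq> 0"
  shows "CG q p (i,j) (k,l) = (if k + l = i + j then p powi (2 * (int l - int i)) / p * cc q i j k else 0)"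
  using assms unfolding CG_def cc_def Let_def
  by (auto simp: field_simps)

lemma telesc:
  fixes u v :: complex
  assumes "1 \<le> i" "i \<le> n" "1 \<le> j" "j \<le> n"
  shows "(u - v) * (\<Sum>k\<in>{1..n}. ((if j \<le> k then 1 else 0) - (if i < k then 1 else 0)) * (u^k * v^(i+j-k)))
     = u^(i+1) * v^j - u^j * v^(i+1)"
proof -
  define D where "D k = u^k * v^(i+j+1-k)" for k
  have e: "(u - v) * (((if j \<le> k then 1 else 0) - (if i < k then 1 else 0)) * (u^k * v^(i+j-k)))
      = (if j \<le> k then D (Suc k) - D k else 0) - (if i < k then D (Suc k) - D k else 0)" for k
  proof (cases "k \<le> i + j")
    case True
    then have "i+j+1-k = Suc (i+j-k)" "i + j + 1 - Suc k = i+j-k" by auto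
    then show ?thesis unfolding D_def by (auto simp: algebra_simps)
  next
    case False
    then show ?thesis by auto
  qed
  have "(u - v) * (\<Sum>k\<in>{1..n}. ((if j \<le> k then 1 else 0) - (if i < k then 1 else 0)) * (u^k * v^(i+j-k)))
     = (\<Sum>k\<in>{1..n}. (if j \<le> k then D (Suc k) - D k else 0)) - (\<Sum>k\<in>{1..n}. (if i < k then D (Suc k) - D k else 0))"
    by (simp add: sum_distrib_left e sum_subtractf)
  also have "(\<Sum>k\<in>{1..n}. (if j \<le> k then D (Suc k) - D k else 0)) = (\<Sum>k\<in>{j..n}. D (Suc k) - D k)"
  proof -
    have "{k\<in>{1..n}. j \<le> k} = {j..n}" using assms by auto
    then show ?thesis by (simp add: sum.inter_filter[symmetric])
  qed
  also have "\<dots> = D (Suc n) - D j" using assms by (intro sum_Suc_diff) auto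
  also have "(\<Sum>k\<in>{1..n}. (if i < k then D (Suc k) - D k else 0)) = (\<Sum>k\<in>{Suc i..n}. D (Suc k) - D k)"
  proof -
    have "{k\<in>{1..n}. i < k} = {Suc i..n}" using assms by auto
    then show ?thesis by (simp add: sum.inter_filter[symmetric])
  qed
  also have "\<dots> = D (Suc n) - D (Suc i)" using assms by (intro sum_Suc_diff) auto
  finally show ?thesis unfolding D_def by (simp add: algebra_simps)
qed

lemma powi_split:
  fixes p :: complex
  assumes "p \<noteq> 0"
  shows "p powi (2 * (int l - int i)) = (p^2)^l / (p^2)^i"
proof -
  have "p powi (2 * (int l - int i)) = p powi (int (2*l) - int (2*i))" by (simp add: algebra_simps)
  also have "\<dots> = p powi int (2*l) / p powi int (2*i)" using power_int_diff[of p "int (2*l)" "int (2*i)"] assms by simp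
  also have "\<dots> = p^(2*l) / p^(2*i)" by (simp only: power_int_of_nat)
  also have "\<dots> = (p^2)^l / (p^2)^i" by (simp add: power_mult)
  finally show ?thesis .
qed

lemma CG_sum:
  assumes q: "q \<noteq> 0" and p: "p \<noteq> 0" and ij: "i \<in> {1..n}" "j \<in> {1..n}" and d: "X \<noteq> p^2*Y"
  shows "(\<Sum>w\<in>idx2 n. CG q p (i,j) w * (X^(fst w) * Y^(snd w)))
     = (Acf q X (p^2*Y) * ((X/p^2)^i * (p^2*Y)^j) + Bcf q X (p^2*Y) * (Y^i * X^j)) / p"
proof -
  define u where "u = X"
  define v where "v = p^2*Y"
  define K where "K = inverse p / (p^2)^i"
  have Kn: "K \<noteq> 0" using p unfolding K_def by simp
  have trm: "CG q p (i,j) (k,l) * (X^k * Y^l) = (if k + l = i + j then K * (cc q i j k * (u^k * v^l)) else 0)" for k l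
    unfolding CG_alt[OF q] powi_split[OF p] u_def v_def K_def using p
    by (simp add: power_mult_distrib field_simps)
  have inner: "(\<Sum>l\<in>{1..n}. CG q p (i,j) (k,l) * (X^k * Y^l))
      = (if k \<le> i + j \<and> i + j - k \<in> {1..n} then K * (cc q i j k * (u^k * v^(i+j-k))) else 0)" for k
  proof -
    have "(\<Sum>l\<in>{1..n}. CG q p (i,j) (k,l) * (X^k * Y^l))
        = (\<Sum>l\<in>{1..n}. if l = i + j - k \<and> k \<le> i + j then K * (cc q i j k * (u^k * v^l)) else 0)"
      unfolding trm by (intro sum.cong refl) auto
    also have "\<dots> = (if k \<le> i + j \<and> i + j - k \<in> {1..n} then K * (cc q i j k * (u^k * v^(i+j-k))) else 0)"
      by (cases "k \<le> i + j") (auto simp: sum.delta)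
    finally show ?thesis .
  qed
  have "(\<Sum>w\<in>idx2 n. CG q p (i,j) w * (X^(fst w) * Y^(snd w)))
      = (\<Sum>k\<in>{1..n}. \<Sum>l\<in>{1..n}. CG q p (i,j) (k,l) * (X^k * Y^l))"
    unfolding idx2_def by (simp add: sum.cartesian_product split_def)
  also have "\<dots> = (\<Sum>k\<in>{1..n}. K * (cc q i j k * (u^k * v^(i+j-k))))"
  proof (rule sum.cong[OF refl])
    fix k assume k: "k \<in> {1..n}"
    show "(\<Sum>l\<in>{1..n}. CG q p (i,j) (k,l) * (X^k * Y^l)) = K * (cc q i j k * (u^k * v^(i+j-k)))"
    proof (cases "k \<le> i + j \<and> i + j - k \<in> {1..n}")
      case True then show ?thesis using inner[of k] by simp
    next
      case False
      then have "cc q i j k = 0" using k ij unfolding cc_def by auto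
      then show ?thesis using False inner[of k] by simp
    qed
  qed
  also have "\<dots> = K * (\<Sum>k\<in>{1..n}. inverse q * (if k = i then 1 else 0) * (u^k * v^(i+j-k))
                + (q - inverse q) * (((if j \<le> k then 1 else 0) - (if i < k then 1 else 0)) * (u^k * v^(i+j-k))))"
    unfolding cc_def by (simp add: sum_distrib_left algebra_simps)
  also have "\<dots> = K * (inverse q * (u^i * v^j) + (q - inverse q) *
        (\<Sum>k\<in>{1..n}. ((if j \<le> k then 1 else 0) - (if i < k then 1 else 0)) * (u^k * v^(i+j-k))))"
  proof -
    have a: "(\<Sum>k\<in>{1..n}. inverse q * (if k = i then 1 else 0) * (u^k * v^(i+j-k))) = inverse q * (u^i * v^j)"
    proof -
      have "(\<Sum>k\<in>{1..n}. inverse q * (if k = i then 1 else 0) * (u^k * v^(i+j-k)))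
          = (\<Sum>k\<in>{1..n}. if k = i then inverse q * (u^k * v^(i+j-k)) else 0)"
        by (intro sum.cong) auto
      then show ?thesis using ij by (simp add: sum.delta)
    qed
    show ?thesis by (simp only: sum.distrib a sum_distrib_left)
  qed
  finally have S: "(\<Sum>w\<in>idx2 n. CG q p (i,j) w * (X^(fst w) * Y^(snd w))) = \<dots>" .
  have uv: "u - v \<noteq> 0" using d unfolding u_def v_def by simp
  have T: "(\<Sum>k\<in>{1..n}. ((if j \<le> k then 1 else 0) - (if i < k then 1 else 0)) * (u^k * v^(i+j-k)))
     = (u^(i+1) * v^j - u^j * v^(i+1)) / (u - v)"
    using telesc[of i n j u v] ij uv by (simp add: field_simps)
  have R: "(Acf q X (p^2*Y) * ((X/p^2)^i * (p^2*Y)^j) + Bcf q X (p^2*Y) * (Y^i * X^j)) / p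
      = (Acf q u v * (u^i*v^j) + Bcf q u v * (v^i*u^j)) / (p*(p^2)^i)"
  proof -
    have "Y^i = v^i/(p^2)^i" "(X/p^2)^i = u^i/(p^2)^i" using p unfolding u_def v_def
      by (simp_all add: power_divide power_mult_distrib)
    then show ?thesis unfolding u_def[symmetric] v_def[symmetric] using p
      by (simp add: field_simps)
  qed
  have uv': "u \<noteq> v" using uv by simp
  have core: "inverse q * (u^i*v^j) + (q - inverse q)*((u^(i+1)*v^j - u^j*v^(i+1))/(u - v))
     = Acf q u v * (u^i*v^j) + Bcf q u v * (v^i*u^j)"
  proof -
    have i: "(u - v) * inverse (u - v) = 1" "q * inverse q = 1" using uv q by auto
    have gen: "A*(U*V) + (q-A)*((U*u*V - W*(V'*v))*I) = (q*u - A*v)*I*(U*V) + -((q-A)*v)*I*(V'*W)"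
      if "(u-v)*I = 1" for A I U V W V' :: complex using that by algebra
    show ?thesis unfolding Acf_def Bcf_def divide_inverse power_add power_one_right
      using gen[OF i(1), of "inverse q" "u^i" "v^j" "u^j" "v^i"] by (simp add: mult.assoc)

  qed
  have KZ: "K * Z = Z / (p*(p^2)^i)" for Z unfolding K_def using p by (simp add: field_simps)
  show ?thesis unfolding S T R core KZ ..
qed
type_synonym pt = "complex \<times> complex \<times> complex"

definition op12 :: "complex \<Rightarrow> complex \<Rightarrow> complex \<Rightarrow> (pt \<Rightarrow> complex) \<Rightarrow> pt \<Rightarrow> complex" where
 "op12 q s p f P = (case P of (x,y,z) \<Rightarrow>
   (Acf q x (s*y) * f (x/s, s*y, z) + Bcf q x (s*y) * f (y,x,z)) / p)"
definition op13 :: "complex \<Rightarrow> complex \<Rightarrow> complex \<Rightarrow> (pt \<Rightarrow> complex) \<Rightarrow> pt \<Rightarrow> complex" where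
 "op13 q s p f P = (case P of (x,y,z) \<Rightarrow>
   (Acf q x (s*z) * f (x/s, y, s*z) + Bcf q x (s*z) * f (z,y,x)) / p)"
definition op23 :: "complex \<Rightarrow> complex \<Rightarrow> complex \<Rightarrow> (pt \<Rightarrow> complex) \<Rightarrow> pt \<Rightarrow> complex" where
 "op23 q s p f P = (case P of (x,y,z) \<Rightarrow>
   (Acf q y (s*z) * f (x, y/s, s*z) + Bcf q y (s*z) * f (x,z,y)) / p)"

lemma Acf_hom: "c \<noteq> 0 \<Longrightarrow> Acf q (c*u) (c*v) = Acf q u v"
  unfolding Acf_def by (simp add: right_diff_distrib[symmetric] mult.left_commute)
lemma Bcf_hom: "c \<noteq> 0 \<Longrightarrow> Bcf q (c*u) (c*v) = Bcf q u v"
  unfolding Bcf_def by (simp add: right_diff_distrib[symmetric] mult.left_commute)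

lemma coefF3:
  assumes "q \<noteq> 0" "u1 \<noteq> u2" "u1 \<noteq> u3" "u2 \<noteq> u3"
  shows "Acf q u1 u2 * Bcf q u1 u3 * Acf q u2 u1 + Bcf q u1 u2 * Bcf q u2 u3 * Bcf q u1 u2
       = Acf q u2 u3 * Bcf q u1 u3 * Acf q u3 u2 + Bcf q u2 u3 * Bcf q u1 u2 * Bcf q u2 u3"
proof -
  have "u1 - u2 \<noteq> 0" "u1 - u3 \<noteq> 0" "u2 - u3 \<noteq> 0" "u2 - u1 \<noteq> 0" "u3 - u2 \<noteq> 0" "u3 - u1 \<noteq> 0"
    using assms by auto
  then have i: "(u1 - u2) * inverse (u1 - u2) = 1" "(u1 - u3) * inverse (u1 - u3) = 1"
    "(u2 - u3) * inverse (u2 - u3) = 1" "(u2 - u1) * inverse (u2 - u1) = 1"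
    "(u3 - u2) * inverse (u3 - u2) = 1" "(u3 - u1) * inverse (u3 - u1) = 1"
    "q * inverse q = 1" using assms by auto
  show ?thesis unfolding Acf_def Bcf_def divide_inverse
    using i by algebra
qed

lemma coefF4:
  assumes "q \<noteq> 0" "u1 \<noteq> u2" "u1 \<noteq> u3" "u2 \<noteq> u3"
  shows "Acf q u1 u2 * Bcf q u1 u3 * Bcf q u2 u1 + Bcf q u1 u2 * Bcf q u2 u3 * Acf q u1 u2
       = Bcf q u2 u3 * Acf q u1 u2 * Bcf q u1 u3"
proof -
  have "u1 - u2 \<noteq> 0" "u1 - u3 \<noteq> 0" "u2 - u3 \<noteq> 0" "u2 - u1 \<noteq> 0" "u3 - u2 \<noteq> 0" "u3 - u1 \<noteq> 0"
    using assms by auto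
  then have i: "(u1 - u2) * inverse (u1 - u2) = 1" "(u1 - u3) * inverse (u1 - u3) = 1"
    "(u2 - u3) * inverse (u2 - u3) = 1" "(u2 - u1) * inverse (u2 - u1) = 1"
    "(u3 - u2) * inverse (u3 - u2) = 1" "(u3 - u1) * inverse (u3 - u1) = 1"
    "q * inverse q = 1" using assms by auto
  show ?thesis unfolding Acf_def Bcf_def divide_inverse
    using i by algebra
qed

lemma coefF6:
  assumes "q \<noteq> 0" "u1 \<noteq> u2" "u1 \<noteq> u3" "u2 \<noteq> u3"
  shows "Bcf q u1 u2 * Acf q u2 u3 * Bcf q u1 u3
       = Acf q u2 u3 * Bcf q u1 u3 * Bcf q u3 u2 + Bcf q u2 u3 * Bcf q u1 u2 * Acf q u2 u3"
proof -
  have "u1 - u2 \<noteq> 0" "u1 - u3 \<noteq> 0" "u2 - u3 \<noteq> 0" "u2 - u1 \<noteq> 0" "u3 - u2 \<noteq> 0" "u3 - u1 \<noteq> 0"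
    using assms by auto
  then have i: "(u1 - u2) * inverse (u1 - u2) = 1" "(u1 - u3) * inverse (u1 - u3) = 1"
    "(u2 - u3) * inverse (u2 - u3) = 1" "(u2 - u1) * inverse (u2 - u1) = 1"
    "(u3 - u2) * inverse (u3 - u2) = 1" "(u3 - u1) * inverse (u3 - u1) = 1"
    "q * inverse q = 1" using assms by auto
  show ?thesis unfolding Acf_def Bcf_def divide_inverse
    using i by algebra
qed

lemma ybe_fun:
  assumes q: "q \<noteq> 0" and s: "s \<noteq> 0" and p: "p \<noteq> 0"
    and d12: "x \<noteq> s*y" and d13: "x \<noteq> s*(s*z)" and d23: "y \<noteq> s*z"
  shows "op12 q s p (op13 q s p (op23 q s p f)) (x,y,z) = op23 q s p (op13 q s p (op12 q s p f)) (x,y,z)"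
proof -
  define a12 where "a12 = Acf q x (s*y)"
  define a13 where "a13 = Acf q x (s*(s*z))"
  define a23 where "a23 = Acf q (s*y) (s*(s*z))"
  define a21 where "a21 = Acf q (s*y) x"
  define a32 where "a32 = Acf q (s*(s*z)) (s*y)"
  define b12 where "b12 = Bcf q x (s*y)"
  define b13 where "b13 = Bcf q x (s*(s*z))"
  define b23 where "b23 = Bcf q (s*y) (s*(s*z))"
  define b21 where "b21 = Bcf q (s*y) x"
  define b32 where "b32 = Bcf q (s*(s*z)) (s*y)"
  have h1: "Acf q (x/s) (s*z) = a13" "Bcf q (x/s) (s*z) = b13"
    "Acf q y (s*z) = a23" "Bcf q y (s*z) = b23" 
    "Acf q (x/s) y = a12" "Bcf q (x/s) y = b12" 
    "Acf q (s*z) y = a32" "Bcf q (s*z) y = b32"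
    unfolding a13_def b13_def a23_def b23_def a12_def b12_def a32_def b32_def
    using Acf_hom[OF s, of q "x/s" "s*z"] Bcf_hom[OF s, of q "x/s" "s*z"]
      Acf_hom[OF s, of q y "s*z"] Bcf_hom[OF s, of q y "s*z"]
      Acf_hom[OF s, of q "x/s" y] Bcf_hom[OF s, of q "x/s" y]
      Acf_hom[OF s, of q "s*z" y] Bcf_hom[OF s, of q "s*z" y] s
    by (simp_all add: mult.commute)
  have u: "x \<noteq> s*y" "x \<noteq> s*(s*z)" "s*y \<noteq> s*(s*z)" using d12 d13 d23 s by auto
  have cF3: "a12*b13*a21 + b12*b23*b12 = a23*b13*a32 + b23*b12*b23"
    using coefF3[OF q u] unfolding a12_def a13_def a23_def a21_def a32_def b12_def b13_def b23_def b21_def b32_def .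
  have cF4: "a12*b13*b21 + b12*b23*a12 = b23*a12*b13"
    using coefF4[OF q u] unfolding a12_def a13_def a23_def a21_def a32_def b12_def b13_def b23_def b21_def b32_def .
  have cF6: "b12*a23*b13 = a23*b13*b32 + b23*b12*a23"
    using coefF6[OF q u] unfolding a12_def a13_def a23_def a21_def a32_def b12_def b13_def b23_def b21_def b32_def .
  show ?thesis
    unfolding op12_def op13_def op23_def
    apply (simp add: s h1 flip: a12_def a13_def a23_def a21_def a32_def b12_def b13_def b23_def b21_def b32_def)
    apply (simp add: p divide_simps)
    using cF3 cF4 cF6 by algebra
qed


definition mono3 :: "nat \<times> nat \<times> nat \<Rightarrow> pt \<Rightarrow> complex" where
  "mono3 w P = (case w of (i,j,m) \<Rightarrow> case P of (x,y,z) \<Rightarrow> x^i * y^j * z^m)"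

definition ap3 :: "nat \<Rightarrow> (nat \<times> nat \<times> nat \<Rightarrow> nat \<times> nat \<times> nat \<Rightarrow> complex) \<Rightarrow> nat \<times> nat \<times> nat \<Rightarrow> pt \<Rightarrow> complex" where
  "ap3 n A w P = (\<Sum>v\<in>idx3 n. A w v * mono3 v P)"

lemma finite_idx2 [simp]: "finite (idx2 n)" unfolding idx2_def by simp
lemma finite_idx3 [simp]: "finite (idx3 n)" unfolding idx3_def by simp

lemma ap3_comp: "ap3 n (comp3 n A B) w P = (\<Sum>v\<in>idx3 n. B w v * ap3 n A v P)"
proof -
  have "ap3 n (comp3 n A B) w P = (\<Sum>y\<in>idx3 n. \<Sum>v\<in>idx3 n. B w v * A v y * mono3 y P)"
    unfolding ap3_def comp3_def by (simp add: sum_distrib_right)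
  also have "\<dots> = (\<Sum>v\<in>idx3 n. \<Sum>y\<in>idx3 n. B w v * A v y * mono3 y P)" by (rule sum.swap)
  also have "\<dots> = (\<Sum>v\<in>idx3 n. B w v * ap3 n A v P)"
    unfolding ap3_def by (simp add: sum_distrib_left mult.assoc)
  finally show ?thesis .
qed

lemma sum_idx3: "(\<Sum>v\<in>idx3 n. g v) = (\<Sum>k\<in>{1..n}. \<Sum>l\<in>{1..n}. \<Sum>r\<in>{1..n}. g (k,l,r))"
  unfolding idx3_def by (simp add: sum.cartesian_product split_def)

lemma sum_idx2: "(\<Sum>v\<in>idx2 n. g v) = (\<Sum>k\<in>{1..n}. \<Sum>l\<in>{1..n}. g (k,l))"
  unfolding idx2_def by (simp add: sum.cartesian_product split_def)

lemma ap3_leg12: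
  assumes q: "q \<noteq> 0" and p: "p \<noteq> 0" and w: "(i,j,m) \<in> idx3 n" and c: "x \<noteq> p^2*y"
  shows "ap3 n (leg12 (CG q p)) (i,j,m) (x,y,z) = op12 q (p^2) p (mono3 (i,j,m)) (x,y,z)"
proof -
  have ij: "i \<in> {1..n}" "j \<in> {1..n}" "m \<in> {1..n}" using w unfolding idx3_def by auto
  have "ap3 n (leg12 (CG q p)) (i,j,m) (x,y,z)
     = (\<Sum>k\<in>{1..n}. \<Sum>l\<in>{1..n}. \<Sum>r\<in>{1..n}. (if m = r then CG q p (i,j) (k,l) * (x^k * y^l) * z^r else 0))"
    unfolding ap3_def sum_idx3 leg12_def mono3_def by (intro sum.cong refl) simp
  also have "\<dots> = (\<Sum>k\<in>{1..n}. \<Sum>l\<in>{1..n}. CG q p (i,j) (k,l) * (x^k * y^l)) * z^m"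
    using ij by (simp add: sum.delta sum_distrib_right)
  also have "\<dots> = (\<Sum>v\<in>idx2 n. CG q p (i,j) v * (x^(fst v) * y^(snd v))) * z^m"
    by (simp add: sum_idx2)
  also have "\<dots> = op12 q (p^2) p (mono3 (i,j,m)) (x,y,z)"
    unfolding CG_sum[OF q p ij(1,2) c] op12_def mono3_def by (simp add: field_simps)
  finally show ?thesis .
qed

lemma ap3_leg13:
  assumes q: "q \<noteq> 0" and p: "p \<noteq> 0" and w: "(i,j,m) \<in> idx3 n" and c: "x \<noteq> p^2*z"
  shows "ap3 n (leg13 (CG q p)) (i,j,m) (x,y,z) = op13 q (p^2) p (mono3 (i,j,m)) (x,y,z)"
proof -
  have ij: "i \<in> {1..n}" "j \<in> {1..n}" "m \<in> {1..n}" using w unfolding idx3_def by auto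
  have "ap3 n (leg13 (CG q p)) (i,j,m) (x,y,z)
     = (\<Sum>k\<in>{1..n}. \<Sum>l\<in>{1..n}. \<Sum>r\<in>{1..n}. (if j = l then CG q p (i,m) (k,r) * (x^k * z^r) * y^l else 0))"
    unfolding ap3_def sum_idx3 leg13_def mono3_def by (intro sum.cong refl) simp
  also have "\<dots> = (\<Sum>k\<in>{1..n}. \<Sum>l\<in>{1..n}. (if j = l then \<Sum>r\<in>{1..n}. CG q p (i,m) (k,r) * (x^k * z^r) * y^l else 0))"
    by (intro sum.cong refl) (simp split: if_split)
  also have "\<dots> = (\<Sum>k\<in>{1..n}. \<Sum>r\<in>{1..n}. CG q p (i,m) (k,r) * (x^k * z^r)) * y^j"
    using ij by (simp add: sum.delta sum_distrib_right)
  also have "\<dots> = (\<Sum>v\<in>idx2 n. CG q p (i,m) v * (x^(fst v) * z^(snd v))) * y^j"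
    by (simp add: sum_idx2)
  also have "\<dots> = op13 q (p^2) p (mono3 (i,j,m)) (x,y,z)"
    unfolding CG_sum[OF q p ij(1,3) c] op13_def mono3_def by (simp add: field_simps)
  finally show ?thesis .
qed

lemma ap3_leg23:
  assumes q: "q \<noteq> 0" and p: "p \<noteq> 0" and w: "(i,j,m) \<in> idx3 n" and c: "y \<noteq> p^2*z"
  shows "ap3 n (leg23 (CG q p)) (i,j,m) (x,y,z) = op23 q (p^2) p (mono3 (i,j,m)) (x,y,z)"
proof -
  have ij: "i \<in> {1..n}" "j \<in> {1..n}" "m \<in> {1..n}" using w unfolding idx3_def by auto
  have "ap3 n (leg23 (CG q p)) (i,j,m) (x,y,z)
     = (\<Sum>k\<in>{1..n}. \<Sum>l\<in>{1..n}. \<Sum>r\<in>{1..n}. (if i = k then CG q p (j,m) (l,r) * (y^l * z^r) * x^k else 0))"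
    unfolding ap3_def sum_idx3 leg23_def mono3_def by (intro sum.cong refl) simp
  also have "\<dots> = (\<Sum>k\<in>{1..n}. (if i = k then \<Sum>l\<in>{1..n}. \<Sum>r\<in>{1..n}. CG q p (j,m) (l,r) * (y^l * z^r) * x^k else 0))"
    by (intro sum.cong refl) (simp split: if_split)
  also have "\<dots> = (\<Sum>l\<in>{1..n}. \<Sum>r\<in>{1..n}. CG q p (j,m) (l,r) * (y^l * z^r)) * x^i"
    using ij by (simp add: sum.delta sum_distrib_right)
  also have "\<dots> = (\<Sum>v\<in>idx2 n. CG q p (j,m) v * (y^(fst v) * z^(snd v))) * x^i"
    by (simp add: sum_idx2)
  also have "\<dots> = op23 q (p^2) p (mono3 (i,j,m)) (x,y,z)"
    unfolding CG_sum[OF q p ij(2,3) c] op23_def mono3_def by (simp add: field_simps)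
  finally show ?thesis .
qed

lemma ap3_L12: "q \<noteq> 0 \<Longrightarrow> p \<noteq> 0 \<Longrightarrow> w \<in> idx3 n \<Longrightarrow> x \<noteq> p^2*y \<Longrightarrow>
  ap3 n (leg12 (CG q p)) w (x,y,z) = op12 q (p^2) p (mono3 w) (x,y,z)"
  by (cases w) (auto intro: ap3_leg12)
lemma ap3_L13: "q \<noteq> 0 \<Longrightarrow> p \<noteq> 0 \<Longrightarrow> w \<in> idx3 n \<Longrightarrow> x \<noteq> p^2*z \<Longrightarrow>
  ap3 n (leg13 (CG q p)) w (x,y,z) = op13 q (p^2) p (mono3 w) (x,y,z)"
  by (cases w) (auto intro: ap3_leg13)
lemma ap3_L23: "q \<noteq> 0 \<Longrightarrow> p \<noteq> 0 \<Longrightarrow> w \<in> idx3 n \<Longrightarrow> y \<noteq> p^2*z \<Longrightarrow>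
  ap3 n (leg23 (CG q p)) w (x,y,z) = op23 q (p^2) p (mono3 w) (x,y,z)"
  by (cases w) (auto intro: ap3_leg23)

lemma op12_lin: "op12 q s p (\<lambda>Q. \<Sum>v\<in>S. c v * g v Q) P = (\<Sum>v\<in>S. c v * op12 q s p (g v) P)"
  unfolding op12_def by (cases P) (simp add: sum_distrib_left sum_divide_distrib add_divide_distrib sum.distrib distrib_left mult.left_commute)
lemma op13_lin: "op13 q s p (\<lambda>Q. \<Sum>v\<in>S. c v * g v Q) P = (\<Sum>v\<in>S. c v * op13 q s p (g v) P)"
  unfolding op13_def by (cases P) (simp add: sum_distrib_left sum_divide_distrib add_divide_distrib sum.distrib distrib_left mult.left_commute)
lemma op23_lin: "op23 q s p (\<lambda>Q. \<Sum>v\<in>S. c v * g v Q) P = (\<Sum>v\<in>S. c v * op23 q s p (g v) P)"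
  unfolding op23_def by (cases P) (simp add: sum_distrib_left sum_divide_distrib add_divide_distrib sum.distrib distrib_left mult.left_commute)

lemma op12_cong: "f (x/s, s*y, z) = g (x/s, s*y, z) \<Longrightarrow> f (y,x,z) = g (y,x,z) \<Longrightarrow>
  op12 q s p f (x,y,z) = op12 q s p g (x,y,z)" by (simp add: op12_def)
lemma op13_cong: "f (x/s, y, s*z) = g (x/s, y, s*z) \<Longrightarrow> f (z,y,x) = g (z,y,x) \<Longrightarrow>
  op13 q s p f (x,y,z) = op13 q s p g (x,y,z)" by (simp add: op13_def)
lemma op23_cong: "f (x, y/s, s*z) = g (x, y/s, s*z) \<Longrightarrow> f (x,z,y) = g (x,z,y) \<Longrightarrow>
  op23 q s p f (x,y,z) = op23 q s p g (x,y,z)" by (simp add: op23_def)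

lemma lhs_fun:
  assumes q: "q \<noteq> 0" and p: "p \<noteq> 0" and w: "w \<in> idx3 n"
    and c1: "x \<noteq> p^2*y" and c2: "x \<noteq> p^2*(p^2*z)" and c3: "y \<noteq> p^2*z"
  shows "ap3 n (comp3 n (comp3 n (leg12 (CG q p)) (leg13 (CG q p))) (leg23 (CG q p))) w (x,y,z)
       = op12 q (p^2) p (op13 q (p^2) p (op23 q (p^2) p (mono3 w))) (x,y,z)"
proof -
  let ?L12 = "leg12 (CG q p)" and ?L13 = "leg13 (CG q p)" and ?L23 = "leg23 (CG q p)"
  let ?o12 = "op12 q (p^2) p" and ?o13 = "op13 q (p^2) p" and ?o23 = "op23 q (p^2) p"
  have p2: "p^2 \<noteq> 0" using p by simp
  have "ap3 n (comp3 n (comp3 n ?L12 ?L13) ?L23) w (x,y,z)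
      = (\<Sum>v\<in>idx3 n. ?L23 w v * (\<Sum>u\<in>idx3 n. ?L13 v u * ap3 n ?L12 u (x,y,z)))"
    by (simp add: ap3_comp)
  also have "\<dots> = (\<Sum>v\<in>idx3 n. ?L23 w v * (\<Sum>u\<in>idx3 n. ?L13 v u * ?o12 (mono3 u) (x,y,z)))"
    using ap3_L12[OF q p _ c1] by simp
  also have "\<dots> = (\<Sum>v\<in>idx3 n. ?L23 w v * ?o12 (ap3 n ?L13 v) (x,y,z))"
    unfolding ap3_def op12_lin ..
  also have "\<dots> = (\<Sum>v\<in>idx3 n. ?L23 w v * ?o12 (?o13 (mono3 v)) (x,y,z))"
  proof (intro sum.cong refl arg_cong2[where f="(*)"] op12_cong)
    fix v assume v: "v \<in> idx3 n"
    have "x / p^2 \<noteq> p^2 * z" using c2 p by (auto simp: field_simps)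
    then show "ap3 n ?L13 v (x / p^2, p^2 * y, z) = ?o13 (mono3 v) (x / p^2, p^2 * y, z)"
      by (rule ap3_L13[OF q p v])
    show "ap3 n ?L13 v (y, x, z) = ?o13 (mono3 v) (y, x, z)"
      by (rule ap3_L13[OF q p v c3])
  qed
  also have "\<dots> = ?o12 (\<lambda>Q. \<Sum>v\<in>idx3 n. ?L23 w v * ?o13 (mono3 v) Q) (x,y,z)"
    by (rule op12_lin[symmetric])
  also have "(\<lambda>Q. \<Sum>v\<in>idx3 n. ?L23 w v * ?o13 (mono3 v) Q) = ?o13 (ap3 n ?L23 w)"
    unfolding ap3_def op13_lin ..
  also have "?o12 (?o13 (ap3 n ?L23 w)) (x,y,z) = ?o12 (?o13 (?o23 (mono3 w))) (x,y,z)"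
  proof (rule op12_cong)
    show "?o13 (ap3 n ?L23 w) (x / p^2, p^2 * y, z) = ?o13 (?o23 (mono3 w)) (x / p^2, p^2 * y, z)"
    proof (rule op13_cong)
      have "p^2*y \<noteq> p^2*(p^2*z)" by (simp only: mult_left_cancel[OF p2]) (rule c3)
      then show "ap3 n ?L23 w (x / p^2 / p^2, p^2 * y, p^2 * z) = ?o23 (mono3 w) (x / p^2 / p^2, p^2 * y, p^2 * z)"
        by (rule ap3_L23[OF q p w])
      have "p^2*y \<noteq> p^2*(x/p^2)" using c1 p by simp
      then show "ap3 n ?L23 w (z, p^2 * y, x / p^2) = ?o23 (mono3 w) (z, p^2 * y, x / p^2)"
        by (rule ap3_L23[OF q p w])
    qed
    show "?o13 (ap3 n ?L23 w) (y, x, z) = ?o13 (?o23 (mono3 w)) (y, x, z)"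
    proof (rule op13_cong)
      show "ap3 n ?L23 w (y / p^2, x, p^2 * z) = ?o23 (mono3 w) (y / p^2, x, p^2 * z)"
        by (rule ap3_L23[OF q p w c2])
      show "ap3 n ?L23 w (z, x, y) = ?o23 (mono3 w) (z, x, y)"
        by (rule ap3_L23[OF q p w c1])
    qed
  qed
  finally show ?thesis .
qed

lemma rhs_fun:
  assumes q: "q \<noteq> 0" and p: "p \<noteq> 0" and w: "w \<in> idx3 n"
    and c1: "x \<noteq> p^2*y" and c2: "x \<noteq> p^2*(p^2*z)" and c3: "y \<noteq> p^2*z"
  shows "ap3 n (comp3 n (comp3 n (leg23 (CG q p)) (leg13 (CG q p))) (leg12 (CG q p))) w (x,y,z)
       = op23 q (p^2) p (op13 q (p^2) p (op12 q (p^2) p (mono3 w))) (x,y,z)"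
proof -
  let ?L12 = "leg12 (CG q p)" and ?L13 = "leg13 (CG q p)" and ?L23 = "leg23 (CG q p)"
  let ?o12 = "op12 q (p^2) p" and ?o13 = "op13 q (p^2) p" and ?o23 = "op23 q (p^2) p"
  have "ap3 n (comp3 n (comp3 n ?L23 ?L13) ?L12) w (x,y,z)
      = (\<Sum>v\<in>idx3 n. ?L12 w v * (\<Sum>u\<in>idx3 n. ?L13 v u * ap3 n ?L23 u (x,y,z)))"
    by (simp add: ap3_comp)
  also have "\<dots> = (\<Sum>v\<in>idx3 n. ?L12 w v * (\<Sum>u\<in>idx3 n. ?L13 v u * ?o23 (mono3 u) (x,y,z)))"
    using ap3_L23[OF q p _ c3] by simp
  also have "\<dots> = (\<Sum>v\<in>idx3 n. ?L12 w v * ?o23 (ap3 n ?L13 v) (x,y,z))"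
    unfolding ap3_def op23_lin ..
  also have "\<dots> = (\<Sum>v\<in>idx3 n. ?L12 w v * ?o23 (?o13 (mono3 v)) (x,y,z))"
  proof (intro sum.cong refl arg_cong2[where f="(*)"] op23_cong)
    fix v assume v: "v \<in> idx3 n"
    show "ap3 n ?L13 v (x, y / p^2, p^2 * z) = ?o13 (mono3 v) (x, y / p^2, p^2 * z)"
      by (rule ap3_L13[OF q p v c2])
    show "ap3 n ?L13 v (x, z, y) = ?o13 (mono3 v) (x, z, y)"
      by (rule ap3_L13[OF q p v c1])
  qed
  also have "\<dots> = ?o23 (\<lambda>Q. \<Sum>v\<in>idx3 n. ?L12 w v * ?o13 (mono3 v) Q) (x,y,z)"
    by (rule op23_lin[symmetric])
  also have "(\<lambda>Q. \<Sum>v\<in>idx3 n. ?L12 w v * ?o13 (mono3 v) Q) = ?o13 (ap3 n ?L12 w)"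
    unfolding ap3_def op13_lin ..
  also have "?o23 (?o13 (ap3 n ?L12 w)) (x,y,z) = ?o23 (?o13 (?o12 (mono3 w))) (x,y,z)"
  proof (rule op23_cong)
    show "?o13 (ap3 n ?L12 w) (x, y / p^2, p^2 * z) = ?o13 (?o12 (mono3 w)) (x, y / p^2, p^2 * z)"
    proof (rule op13_cong)
      have "x / p^2 \<noteq> p^2 * (y / p^2)" using c1 p by (auto simp: field_simps)
      then show "ap3 n ?L12 w (x / p^2, y / p^2, p^2 * (p^2 * z)) = ?o12 (mono3 w) (x / p^2, y / p^2, p^2 * (p^2 * z))"
        by (rule ap3_L12[OF q p w])
      have "p^2 * z \<noteq> p^2 * (y / p^2)" using c3 p by (auto simp: field_simps)
      then show "ap3 n ?L12 w (p^2 * z, y / p^2, x) = ?o12 (mono3 w) (p^2 * z, y / p^2, x)"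
        by (rule ap3_L12[OF q p w])
    qed
    show "?o13 (ap3 n ?L12 w) (x, z, y) = ?o13 (?o12 (mono3 w)) (x, z, y)"
    proof (rule op13_cong)
      have "x / p^2 \<noteq> p^2 * z" using c2 p by (auto simp: field_simps)
      then show "ap3 n ?L12 w (x / p^2, z, p^2 * y) = ?o12 (mono3 w) (x / p^2, z, p^2 * y)"
        by (rule ap3_L12[OF q p w])
      show "ap3 n ?L12 w (y, z, x) = ?o12 (mono3 w) (y, z, x)"
        by (rule ap3_L12[OF q p w c3])
    qed
  qed
  finally show ?thesis .
qed

lemma poly_zero1:
  fixes d :: "nat \<Rightarrow> complex"
  assumes F: "finite F" and h: "\<And>X. X \<notin> F \<Longrightarrow> (\<Sum>k\<in>{1..n}. d k * X^k) = 0" and k: "k \<in> {1..n}"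
  shows "d k = 0"
proof -
  define e where "e k = (if k = 0 then 0 else d k)" for k
  have eq: "(\<Sum>i\<le>n. e i * X^i) = (\<Sum>k\<in>{1..n}. d k * X^k)" for X
  proof -
    have "(\<Sum>i\<le>n. e i * X^i) = (\<Sum>i\<in>{1..n}. e i * X^i)"
      by (rule sum.mono_neutral_right) (auto simp: e_def)
    also have "\<dots> = (\<Sum>k\<in>{1..n}. d k * X^k)" by (intro sum.cong refl) (auto simp: e_def)
    finally show ?thesis .
  qed
  have sub: "UNIV - F \<subseteq> {X. (\<Sum>i\<le>n. e i * X^i) = 0}" using h eq by auto
  have "infinite (UNIV - F :: complex set)"
    using F infinite_UNIV_char_0 by (simp add: Diff_infinite_finite)
  then have "infinite {X. (\<Sum>i\<le>n. e i * X^i) = 0}" using sub finite_subset by blast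
  then have "\<not> (\<exists>i\<le>n. e i \<noteq> 0)" using polyfun_finite_roots by blast
  then show ?thesis using k unfolding e_def by auto
qed

lemma extract3:
  fixes c :: "nat \<times> nat \<times> nat \<Rightarrow> complex"
  assumes h: "\<And>x y z. x \<noteq> s*y \<Longrightarrow> x \<noteq> s*(s*z) \<Longrightarrow> y \<noteq> s*z \<Longrightarrow> (\<Sum>v\<in>idx3 n. c v * mono3 v (x,y,z)) = 0"
    and v: "v \<in> idx3 n"
  shows "c v = 0"
proof -
  have E: "(\<Sum>v\<in>idx3 n. c v * mono3 v (x,y,z)) = (\<Sum>k\<in>{1..n}. (\<Sum>l\<in>{1..n}. (\<Sum>r\<in>{1..n}. c (k,l,r) * z^r) * y^l) * x^k)" for x y z
    unfolding sum_idx3 mono3_def by (simp add: sum_distrib_left sum_distrib_right mult.assoc mult.commute mult.left_commute)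
  have s1: "(\<Sum>l\<in>{1..n}. (\<Sum>r\<in>{1..n}. c (k,l,r) * z^r) * y^l) = 0" if "y \<noteq> s*z" "k \<in> {1..n}" for y z k
    by (rule poly_zero1[where F="{s*y, s*(s*z)}" and d="\<lambda>k. \<Sum>l\<in>{1..n}. (\<Sum>r\<in>{1..n}. c (k,l,r) * z^r) * y^l"]) (use that h E in auto)
  have s2: "(\<Sum>r\<in>{1..n}. c (k,l,r) * z^r) = 0" if "k \<in> {1..n}" "l \<in> {1..n}" for z k l
    by (rule poly_zero1[where F="{s*z}" and d="\<lambda>l. \<Sum>r\<in>{1..n}. c (k,l,r) * z^r"]) (use that s1 in auto)
  obtain k l r where vv: "v = (k,l,r)" by (cases v)
  have "k \<in> {1..n}" "l \<in> {1..n}" "r \<in> {1..n}" using v unfolding vv idx3_def by auto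
  note kk = this
  have "c (k,l,r) = 0" by (rule poly_zero1[where F="{}" and d="\<lambda>r. c (k,l,r)"]) (use s2 kk in auto)
  then show ?thesis unfolding vv .
qed

lemma ybe_matrix:
  assumes q: "q \<noteq> 0" and p: "p \<noteq> 0" and w: "w \<in> idx3 n" and v: "v \<in> idx3 n"
  shows "comp3 n (comp3 n (leg12 (CG q p)) (leg13 (CG q p))) (leg23 (CG q p)) w v
       = comp3 n (comp3 n (leg23 (CG q p)) (leg13 (CG q p))) (leg12 (CG q p)) w v"
proof -
  let ?A = "comp3 n (comp3 n (leg12 (CG q p)) (leg13 (CG q p))) (leg23 (CG q p))"
  let ?B = "comp3 n (comp3 n (leg23 (CG q p)) (leg13 (CG q p))) (leg12 (CG q p))"
  have "(\<lambda>v. ?A w v - ?B w v) v = 0"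
  proof (rule extract3[where s="p^2"])
    fix x y z assume c1: "x \<noteq> p^2*y" and c2: "x \<noteq> p^2*(p^2*z)" and c3: "y \<noteq> p^2*z"
    have "ap3 n ?A w (x,y,z) = ap3 n ?B w (x,y,z)"
      unfolding lhs_fun[OF q p w c1 c2 c3] rhs_fun[OF q p w c1 c2 c3]
      by (rule ybe_fun) (use q p c1 c2 c3 in auto)
    then show "(\<Sum>v\<in>idx3 n. (?A w v - ?B w v) * mono3 v (x,y,z)) = 0"
      unfolding ap3_def by (simp add: left_diff_distrib sum_subtractf)
  qed (rule v)
  then show ?thesis by simp
qed

definition mono2 :: "nat \<times> nat \<Rightarrow> complex \<times> complex \<Rightarrow> complex" where
  "mono2 w P = (case w of (i,j) \<Rightarrow> case P of (x,y) \<Rightarrow> x^i * y^j)"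

definition ap2 :: "nat \<Rightarrow> (nat \<times> nat \<Rightarrow> nat \<times> nat \<Rightarrow> complex) \<Rightarrow> nat \<times> nat \<Rightarrow> complex \<times> complex \<Rightarrow> complex" where
  "ap2 n A w P = (\<Sum>v\<in>idx2 n. A w v * mono2 v P)"

definition Rop :: "complex \<Rightarrow> complex \<Rightarrow> (complex \<times> complex \<Rightarrow> complex) \<Rightarrow> complex \<times> complex \<Rightarrow> complex" where
  "Rop q s f P = (case P of (x,y) \<Rightarrow> Acf q x (s*y) * f (s*y, x/s) + Bcf q x (s*y) * f (x,y))"

lemma ap2_comp: "ap2 n (comp2 n A B) w P = (\<Sum>v\<in>idx2 n. B w v * ap2 n A v P)"
proof -
  have "ap2 n (comp2 n A B) w P = (\<Sum>y\<in>idx2 n. \<Sum>v\<in>idx2 n. B w v * A v y * mono2 y P)"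
    unfolding ap2_def comp2_def by (simp add: sum_distrib_right)
  also have "\<dots> = (\<Sum>v\<in>idx2 n. \<Sum>y\<in>idx2 n. B w v * A v y * mono2 y P)" by (rule sum.swap)
  also have "\<dots> = (\<Sum>v\<in>idx2 n. B w v * ap2 n A v P)"
    unfolding ap2_def by (simp add: sum_distrib_left mult.assoc)
  finally show ?thesis .
qed

lemma CGcheck_eq:
  assumes w: "w \<in> idx2 n"
  shows "CGcheck n q p w v = p * CG q p (snd w, fst w) v"
proof -
  have sw: "(snd w, fst w) \<in> idx2 n" using w unfolding idx2_def by auto
  have "comp2 n (CG q p) flip w v = (\<Sum>z\<in>idx2 n. if z = (snd w, fst w) then CG q p z v else 0)"
    unfolding comp2_def flip_def by (intro sum.cong refl) auto
  also have "\<dots> = CG q p (snd w, fst w) v" using sw by (simp add: sum.delta)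
  finally show ?thesis unfolding CGcheck_def by simp
qed

lemma ap2_check:
  assumes q: "q \<noteq> 0" and p: "p \<noteq> 0" and w: "w \<in> idx2 n" and c: "x \<noteq> p^2*y"
  shows "ap2 n (CGcheck n q p) w (x,y) = Rop q (p^2) (mono2 w) (x,y)"
proof -
  obtain i j where wij: "w = (i,j)" by (cases w)
  have ij: "i \<in> {1..n}" "j \<in> {1..n}" using w unfolding wij idx2_def by auto
  have "ap2 n (CGcheck n q p) w (x,y) = p * (\<Sum>v\<in>idx2 n. CG q p (j,i) v * (x^(fst v) * y^(snd v)))"
  proof -
    have cw: "CGcheck n q p (i,j) v = p * CG q p (j,i) v" for v using CGcheck_eq[OF w] wij by simp
    show ?thesis unfolding ap2_def wij cw mono2_def
      by (simp add: sum_distrib_left split_def mult.assoc)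
  qed
  also have "\<dots> = Rop q (p^2) (mono2 w) (x,y)"
    unfolding CG_sum[OF q p ij(2,1) c] Rop_def mono2_def wij using p by (simp add: field_simps)
  finally show ?thesis .
qed

lemma Rop_lin: "Rop q s (\<lambda>Q. \<Sum>v\<in>S. c v * g v Q) P = (\<Sum>v\<in>S. c v * Rop q s (g v) P)"
  unfolding Rop_def by (cases P) (simp add: sum_distrib_left sum.distrib distrib_left mult.left_commute)

lemma Rop_cong: "f (s*y, x/s) = g (s*y, x/s) \<Longrightarrow> f (x,y) = g (x,y) \<Longrightarrow> Rop q s f (x,y) = Rop q s g (x,y)"
  by (simp add: Rop_def)

lemma hecke_coef:
  assumes q: "q \<noteq> 0" and uv: "u \<noteq> v"
  shows "Acf q u v * Acf q v u + Bcf q u v * Bcf q u v = (q - inverse q) * Bcf q u v + 1"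
    and "Acf q u v * Bcf q v u + Bcf q u v * Acf q u v = (q - inverse q) * Acf q u v"
proof -
  have i: "(u - v) * inverse (u - v) = 1" "(v - u) * inverse (v - u) = 1" "q * inverse q = 1"
    using q uv by auto
  show "Acf q u v * Acf q v u + Bcf q u v * Bcf q u v = (q - inverse q) * Bcf q u v + 1"
    unfolding Acf_def Bcf_def divide_inverse using i by algebra
  show "Acf q u v * Bcf q v u + Bcf q u v * Acf q u v = (q - inverse q) * Acf q u v"
    unfolding Acf_def Bcf_def divide_inverse using i by algebra
qed

lemma hecke_fun:
  assumes q: "q \<noteq> 0" and s: "s \<noteq> 0" and c: "x \<noteq> s*y"
  shows "Rop q s (Rop q s f) (x,y) = (q - inverse q) * Rop q s f (x,y) + f (x,y)"
proof -
  define A where "A = Acf q x (s*y)"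
  define A' where "A' = Acf q (s*y) x"
  define B where "B = Bcf q x (s*y)"
  define B' where "B' = Bcf q (s*y) x"
  have h1: "A*A' + B*B = (q - inverse q)*B + 1" "A*B' + B*A = (q - inverse q)*A"
    using hecke_coef[OF q c] unfolding A_def A'_def B_def B'_def by auto
  have "Rop q s (Rop q s f) (x,y) = A * (A' * f (x,y) + B' * f (s*y, x/s)) + B * (A * f (s*y, x/s) + B * f (x,y))"
    unfolding Rop_def A_def A'_def B_def B'_def using s by simp
  also have "\<dots> = (A*A' + B*B) * f (x,y) + (A*B' + B*A) * f (s*y, x/s)" by (simp add: algebra_simps)
  also have "\<dots> = (q - inverse q) * (A * f (s*y, x/s) + B * f (x,y)) + f (x,y)"
    unfolding h1 by (simp add: algebra_simps)
  also have "\<dots> = (q - inverse q) * Rop q s f (x,y) + f (x,y)"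
    unfolding Rop_def A_def B_def by simp
  finally show ?thesis .
qed

lemma extract2:
  fixes c :: "nat \<times> nat \<Rightarrow> complex"
  assumes h: "\<And>x y. x \<noteq> s*y \<Longrightarrow> (\<Sum>v\<in>idx2 n. c v * mono2 v (x,y)) = 0"
    and v: "v \<in> idx2 n"
  shows "c v = 0"
proof -
  have E: "(\<Sum>v\<in>idx2 n. c v * mono2 v (x,y)) = (\<Sum>k\<in>{1..n}. (\<Sum>l\<in>{1..n}. c (k,l) * y^l) * x^k)" for x y
    unfolding sum_idx2 mono2_def by (simp add: sum_distrib_left sum_distrib_right mult.assoc mult.commute mult.left_commute)
  have s1: "(\<Sum>l\<in>{1..n}. c (k,l) * y^l) = 0" if "k \<in> {1..n}" for y k
    by (rule poly_zero1[where F="{s*y}" and d="\<lambda>k. \<Sum>l\<in>{1..n}. c (k,l) * y^l"]) (use that h E in auto)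
  obtain k l where vv: "v = (k,l)" by (cases v)
  have "k \<in> {1..n}" "l \<in> {1..n}" using v unfolding vv idx2_def by auto
  note kk = this
  have "c (k,l) = 0" by (rule poly_zero1[where F="{}" and d="\<lambda>l. c (k,l)"]) (use s1 kk in auto)
  then show ?thesis unfolding vv .
qed

lemma hecke_matrix:
  assumes q: "q \<noteq> 0" and p: "p \<noteq> 0" and w: "w \<in> idx2 n" and v: "v \<in> idx2 n"
  shows "comp2 n (\<lambda>a b. CGcheck n q p a b - q * id2 a b)
                    (\<lambda>a b. CGcheck n q p a b + inverse q * id2 a b) w v = 0"
proof -
  let ?Ch = "CGcheck n q p"
  let ?H = "comp2 n (\<lambda>a b. ?Ch a b - q * id2 a b) (\<lambda>a b. ?Ch a b + inverse q * id2 a b)"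
  show ?thesis
  proof (rule extract2[where s="p^2"])
    fix x y assume c: "x \<noteq> p^2*y"
    let ?m = "mono2 w" and ?R = "Rop q (p^2)"
    define G where "G v = ?R (mono2 v) (x,y) - q * mono2 v (x,y)" for v
    have A1: "ap2 n (\<lambda>a b. ?Ch a b - q * id2 a b) v (x,y) = G v" if "v \<in> idx2 n" for v
    proof -
      have "ap2 n (\<lambda>a b. ?Ch a b - q * id2 a b) v (x,y) = ap2 n ?Ch v (x,y) - q * (\<Sum>u\<in>idx2 n. id2 v u * mono2 u (x,y))"
        unfolding ap2_def by (simp add: left_diff_distrib sum_subtractf sum_distrib_left mult.assoc)
      also have "(\<Sum>u\<in>idx2 n. id2 v u * mono2 u (x,y)) = (\<Sum>u\<in>idx2 n. if u = v then mono2 u (x,y) else 0)"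
        unfolding id2_def by (intro sum.cong refl) auto
      also have "\<dots> = mono2 v (x,y)" using that by (simp add: sum.delta)
      finally show ?thesis unfolding G_def ap2_check[OF q p that c] .
    qed
    have "ap2 n ?H w (x,y) = (\<Sum>v\<in>idx2 n. (?Ch w v + inverse q * id2 w v) * G v)"
      unfolding ap2_comp using A1 by (intro sum.cong refl) simp
    also have "\<dots> = (\<Sum>v\<in>idx2 n. ?Ch w v * G v) + inverse q * G w"
    proof -
      have "(\<Sum>v\<in>idx2 n. inverse q * id2 w v * G v) = (\<Sum>v\<in>idx2 n. if v = w then inverse q * G v else 0)"
        unfolding id2_def by (intro sum.cong refl) auto
      also have "\<dots> = inverse q * G w" using w by (simp add: sum.delta)
      finally show ?thesis by (simp add: distrib_right sum.distrib)
    qed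
    also have "(\<Sum>v\<in>idx2 n. ?Ch w v * G v) = ?R (ap2 n ?Ch w) (x,y) - q * ap2 n ?Ch w (x,y)"
      unfolding G_def ap2_def Rop_lin by (simp add: right_diff_distrib sum_subtractf sum_distrib_left mult.left_commute)
    also have "?R (ap2 n ?Ch w) (x,y) = ?R (?R ?m) (x,y)"
    proof (rule Rop_cong)
      have "p^2*y \<noteq> p^2*(x/p^2)" using c p by simp
      then show "ap2 n ?Ch w (p^2*y, x/p^2) = ?R ?m (p^2*y, x/p^2)" by (rule ap2_check[OF q p w])
      show "ap2 n ?Ch w (x,y) = ?R ?m (x,y)" by (rule ap2_check[OF q p w c])
    qed
    also have "?R (?R ?m) (x,y) = (q - inverse q) * ?R ?m (x,y) + ?m (x,y)"
      by (rule hecke_fun) (use q p c in auto)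
    finally have "ap2 n ?H w (x,y) = (q - inverse q) * ?R ?m (x,y) + ?m (x,y) - q * ap2 n ?Ch w (x,y) + inverse q * G w" .
    also have "\<dots> = 0" unfolding ap2_check[OF q p w c] G_def using q by (simp add: algebra_simps)
    finally show "(\<Sum>v\<in>idx2 n. ?H w v * mono2 v (x,y)) = 0" unfolding ap2_def .
  qed (rule v)
qed

theorem mainTheorem7:
  fixes q p :: complex and n :: nat
  assumes "q \<noteq> 0" and "p \<noteq> 0" and "n \<ge> 1"
  shows "(\<forall>x\<in>idx3 n. \<forall>y\<in>idx3 n.
            comp3 n (comp3 n (leg12 (CG q p)) (leg13 (CG q p))) (leg23 (CG q p)) x y
          = comp3 n (comp3 n (leg23 (CG q p)) (leg13 (CG q p))) (leg12 (CG q p)) x y)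
       \<and> (\<forall>x\<in>idx2 n. \<forall>y\<in>idx2 n.
            comp2 n (\<lambda>a b. CGcheck n q p a b - q * id2 a b)
                    (\<lambda>a b. CGcheck n q p a b + inverse q * id2 a b) x y = 0)"
  using ybe_matrix[OF assms(1,2)] hecke_matrix[OF assms(1,2)] by blast

end
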